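(* Let $X$ be a regular Hausdorff $g$-first-countable space. Then $\mathcal{F}(X)$ is $g$-first-countable if and only if $\mathcal{F}(X)$ is sequential.
   Context: $\mathcal{F}(X)$ is the set of nonempty finite subsets of $X$ with the Vietoris topology (base: $\langle U_1,\dots,U_k\rangle=\{A: A\subset\bigcup_i U_i,\ A\cap U_j\neq\emptyset\ \forall j\}$, $U_i$ open in $X$). A space is sequential if every sequentially open set (a set $U$ such that every sequence converging to a point of $U$ is eventually in $U$) is open. A weak base for $Y$ is a cover $\mathcal{P}=\bigcup_{y\in Y}\mathcal{P}_y$ such that: for $U,V\in\mathcal{P}_y$ there is $W\in\mathcal{P}_y$ with $W\subset U\cap V$; each member of $\mathcal{P}_y$ contains $y$ and for each open $U\ni y$ some $P\in\mathcal{P}_y$ has $P\subset U$; and $G\subset Y$ is open whenever for each $y\in G$ some $P\in\mathcal{P}_y$ has $P\subset G$. $Y$ is $g$-first-countable if it has a weak base with each $\mathcal{P}_y$ countable. *)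

theory Defs
  imports "HOL-Analysis.Analysis"
begin

definition fin_subsets :: "'a topology \<Rightarrow> 'a set set" where
  "fin_subsets X = {A. finite A \<and> A \<noteq> {} \<and> A \<subseteq> topspace X}"

definition vietoris_basic :: "'a topology \<Rightarrow> 'a set set \<Rightarrow> 'a set set" where
  "vietoris_basic X Us = {A \<in> fin_subsets X. A \<subseteq> \<Union>Us \<and> (\<forall>U\<in>Us. A \<inter> U \<noteq> {})}"

definition fin_subsets_topology :: "'a topology \<Rightarrow> 'a set topology" where
  "fin_subsets_topology X = topology_generated_by
     {vietoris_basic X Us | Us. finite Us \<and> Us \<noteq> {} \<and> (\<forall>U\<in>Us. openin X U)}"

definition sequentially_open :: "'a topology \<Rightarrow> 'a set \<Rightarrow> bool" where
  "sequentially_open T U \<longleftrightarrow> U \<subseteq> topspace T \<and>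
     (\<forall>x\<in>U. \<forall>s. (\<forall>n. s n \<in> topspace T) \<and> limitin T s x sequentially
        \<longrightarrow> eventually (\<lambda>n. s n \<in> U) sequentially)"

definition sequential_space :: "'a topology \<Rightarrow> bool" where
  "sequential_space T \<longleftrightarrow> (\<forall>U. sequentially_open T U \<longrightarrow> openin T U)"

definition weak_base :: "'a topology \<Rightarrow> ('a \<Rightarrow> 'a set set) \<Rightarrow> bool" where
  "weak_base T P \<longleftrightarrow>
     (\<forall>y\<in>topspace T. \<forall>Q\<in>P y. Q \<subseteq> topspace T \<and> y \<in> Q) \<and>
     (\<forall>y\<in>topspace T. \<forall>U\<in>P y. \<forall>V\<in>P y. \<exists>W\<in>P y. W \<subseteq> U \<inter> V) \<and>
     (\<forall>y\<in>topspace T. \<forall>U. openin T U \<and> y \<in> U \<longrightarrow> (\<exists>Q\<in>P y. Q \<subseteq> U)) \<and>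
     (\<forall>G. G \<subseteq> topspace T \<and> (\<forall>y\<in>G. \<exists>Q\<in>P y. Q \<subseteq> G) \<longrightarrow> openin T G)"

definition g_first_countable :: "'a topology \<Rightarrow> bool" where
  "g_first_countable T \<longleftrightarrow> (\<exists>P. weak_base T P \<and> (\<forall>y\<in>topspace T. countable (P y)))"

end

theory Submission
  imports Defs
begin

definition VS :: "'a topology \<Rightarrow> 'a set \<Rightarrow> ('a \<Rightarrow> 'a set) \<Rightarrow> 'a set set" where
  "VS X A q = {B \<in> fin_subsets X. B \<subseteq> \<Union>(q ` A) \<and> (\<forall>a\<in>A. B \<inter> q a \<noteq> {})}"

lemma wb1: "weak_base T P \<Longrightarrow> y \<in> topspace T \<Longrightarrow> Q \<in> P y \<Longrightarrow> Q \<subseteq> topspace T \<and> y \<in> Q"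
  apply (drule weak_base_def[THEN iffD1, THEN conjunct1]) by blast
lemma wb2: "weak_base T P \<Longrightarrow> y \<in> topspace T \<Longrightarrow> U \<in> P y \<Longrightarrow> V \<in> P y \<Longrightarrow> \<exists>W\<in>P y. W \<subseteq> U \<inter> V"
  apply (drule weak_base_def[THEN iffD1, THEN conjunct2, THEN conjunct1]) by blast
lemma wb3: "weak_base T P \<Longrightarrow> y \<in> topspace T \<Longrightarrow> openin T U \<Longrightarrow> y \<in> U \<Longrightarrow> \<exists>Q\<in>P y. Q \<subseteq> U"
  apply (drule weak_base_def[THEN iffD1, THEN conjunct2, THEN conjunct2, THEN conjunct1]) by blast
lemma wb4: "weak_base T P \<Longrightarrow> G \<subseteq> topspace T \<Longrightarrow> (\<And>y. y \<in> G \<Longrightarrow> \<exists>Q\<in>P y. Q \<subseteq> G) \<Longrightarrow> openin T G"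
  apply (drule weak_base_def[THEN iffD1, THEN conjunct2, THEN conjunct2, THEN conjunct2]) by blast

lemma topspace_F: "topspace (fin_subsets_topology X) = fin_subsets X"
proof -
  have "\<forall>Us. vietoris_basic X Us \<subseteq> fin_subsets X" by (auto simp: vietoris_basic_def)
  moreover have "fin_subsets X \<subseteq> vietoris_basic X {topspace X}"
    by (auto simp: vietoris_basic_def fin_subsets_def)
  ultimately show ?thesis
    unfolding fin_subsets_topology_def topology_generated_by_topspace
  proof (intro equalityI)
    show "\<Union> {vietoris_basic X Us |Us. finite Us \<and> Us \<noteq> {} \<and> (\<forall>U\<in>Us. openin X U)} \<subseteq> fin_subsets X"
      using \<open>\<forall>Us. vietoris_basic X Us \<subseteq> fin_subsets X\<close> by blast
    have "vietoris_basic X {topspace X} \<in> {vietoris_basic X Us |Us. finite Us \<and> Us \<noteq> {} \<and> (\<forall>U\<in>Us. openin X U)}"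
      by (intro CollectI exI[of _ "{topspace X}"]) auto
    then show "fin_subsets X \<subseteq> \<Union> {vietoris_basic X Us |Us. finite Us \<and> Us \<noteq> {} \<and> (\<forall>U\<in>Us. openin X U)}"
      using \<open>fin_subsets X \<subseteq> vietoris_basic X {topspace X}\<close> by blast
  qed
qed

lemma open_basic:
  assumes "finite Us" "Us \<noteq> {}" "\<forall>U\<in>Us. openin X U"
  shows "openin (fin_subsets_topology X) (vietoris_basic X Us)"
  unfolding fin_subsets_topology_def
  by (rule topology_generated_by_Basis) (use assms in blast)

lemma wfc_imp_sequential:
  assumes wb: "weak_base T P" and cP: "\<forall>y\<in>topspace T. countable (P y)"
  shows "sequential_space T"
  unfolding sequential_space_def
proof (intro allI impI)
  fix U assume so: "sequentially_open T U"
  have Us: "U \<subseteq> topspace T" using so by (simp add: sequentially_open_def)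
  have so2: "\<And>x s. x \<in> U \<Longrightarrow> (\<forall>n. s n \<in> topspace T) \<Longrightarrow> limitin T s x sequentially \<Longrightarrow> eventually (\<lambda>n. s n \<in> U) sequentially"
    using so by (simp add: sequentially_open_def)
  have "\<forall>y\<in>U. \<exists>Q\<in>P y. Q \<subseteq> U"
  proof (rule ccontr)
    assume "\<not> (\<forall>y\<in>U. \<exists>Q\<in>P y. Q \<subseteq> U)"
    then obtain y where y: "y \<in> U" and bad: "\<And>Q. Q \<in> P y \<Longrightarrow> \<not> Q \<subseteq> U" by blast
    have yT: "y \<in> topspace T" using y Us by blast
    have ne: "P y \<noteq> {}" using wb3[OF wb yT openin_topspace yT] by blast
    obtain f :: "nat \<Rightarrow> _" where f: "range f = P y"
      using range_from_nat_into[OF ne] cP yT by blast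
    have step: "\<forall>W\<in>P y. \<forall>n. \<exists>W'\<in>P y. W' \<subseteq> W \<inter> f n"
      using wb2[OF wb yT] f by blast
    define g where "g = rec_nat (f 0) (\<lambda>n W. SOME W'. W' \<in> P y \<and> W' \<subseteq> W \<inter> f (Suc n))"
    have g0: "g 0 = f 0" by (simp add: g_def)
    have gS: "g (Suc n) = (SOME W'. W' \<in> P y \<and> W' \<subseteq> g n \<inter> f (Suc n))" for n
      by (simp add: g_def)
    have gP: "g n \<in> P y \<and> (\<forall>k\<le>n. g n \<subseteq> f k)" for n
    proof (induction n)
      case 0 then show ?case using f g0 by auto
    next
      case (Suc n)
      then have "\<exists>W'. W' \<in> P y \<and> W' \<subseteq> g n \<inter> f (Suc n)" using step by blast
      then have "g (Suc n) \<in> P y \<and> g (Suc n) \<subseteq> g n \<inter> f (Suc n)"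
        unfolding gS by (rule someI_ex)
      then show ?case using Suc by (auto simp: le_Suc_eq)
    qed
    have "\<forall>n. \<exists>x. x \<in> g n \<and> x \<notin> U" using bad gP by blast
    then obtain x where "\<forall>n. x n \<in> g n \<and> x n \<notin> U" by (rule choice[THEN exE]) 
    then have x: "\<And>n. x n \<in> g n" "\<And>n. x n \<notin> U" by auto
    have xT: "x n \<in> topspace T" for n using x(1)[of n] gP[of n] wb1[OF wb yT] by blast
    have "limitin T x y sequentially"
      unfolding limitin_def
    proof (intro conjI allI impI)
      show "y \<in> topspace T" by fact
      fix V assume V: "openin T V \<and> y \<in> V"
      then obtain Q where "Q \<in> P y" "Q \<subseteq> V" using wb3[OF wb yT] by blast
      then obtain k where "f k \<subseteq> V" using f by (metis rangeE)
      then show "eventually (\<lambda>n. x n \<in> V) sequentially"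
        unfolding eventually_sequentially using gP x(1) by blast
    qed
    then have "eventually (\<lambda>n. x n \<in> U) sequentially"
      using so2[OF y] xT by blast
    then show False using x(2) by auto
  qed
  then show "openin T U" using wb4[OF wb Us] by blast
qed

lemma L2:
  assumes wb: "weak_base X P" and H: "Hausdorff_space X"
    and lim: "limitin X t a sequentially" and Q: "Q \<in> P a"
  shows "eventually (\<lambda>n. t n \<in> Q) sequentially"
proof -
  have a: "a \<in> topspace X" using lim unfolding limitin_def by blast
  have Qs: "Q \<subseteq> topspace X" "a \<in> Q" using wb1[OF wb a Q] by auto
  define C where "C = {t n | n. t n \<notin> Q}"
  define G where "G = topspace X - C"
  have "\<forall>y\<in>G. \<exists>Q'\<in>P y. Q' \<subseteq> G"
  proof
    fix y assume y: "y \<in> G"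
    show "\<exists>Q'\<in>P y. Q' \<subseteq> G"
    proof (cases "y = a")
      case True then show ?thesis using Q Qs by (auto simp: G_def C_def)
    next
      case False
      then obtain U V where UV: "openin X U" "openin X V" "y \<in> U" "a \<in> V" "disjnt U V"
        using H y a unfolding Hausdorff_space_def G_def by blast
      then have "eventually (\<lambda>n. t n \<in> V) sequentially" using lim unfolding limitin_def by blast
      then obtain N where N: "\<And>n. n \<ge> N \<Longrightarrow> t n \<in> V" by (auto simp: eventually_sequentially)
      define F where "F = topspace X \<inter> (C \<inter> t ` {..<N})"
      have "finite F" unfolding F_def by auto
      then have cF: "closedin X F"
        using H Hausdorff_imp_t1_space t1_space_closedin_finite unfolding F_def by blast
      define W where "W = U - F"
      have oW: "openin X W" unfolding W_def using UV(1) cF by (rule openin_diff)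
      have yW: "y \<in> W" using y UV(3) by (auto simp: W_def F_def G_def)
      obtain Q' where Q': "Q' \<in> P y" "Q' \<subseteq> W"
        using wb3[OF wb _ oW yW] y unfolding G_def by blast
      have "W \<subseteq> G"
      proof
        fix w assume w: "w \<in> W"
        then have wU: "w \<in> U" "w \<in> topspace X" using UV(1) openin_subset by (auto simp: W_def)
        have "w \<notin> C"
        proof
          assume "w \<in> C"
          then obtain n where n: "w = t n" "t n \<notin> Q" by (auto simp: C_def)
          show False
          proof (cases "n \<ge> N")
            case True then show False using N n wU UV(5) by (auto simp: disjnt_def)
          next
            case False then have "w \<in> F" using n wU \<open>w \<in> C\<close> by (auto simp: F_def)
            then show False using w by (auto simp: W_def)
          qed
        qed
        then show "w \<in> G" using wU by (auto simp: G_def)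
      qed
      then show ?thesis using Q' by blast
    qed
  qed
  then have "openin X G" using wb4[OF wb, of G] unfolding G_def by blast
  moreover have "a \<in> G" using a Qs by (auto simp: G_def C_def)
  ultimately have "eventually (\<lambda>n. t n \<in> G) sequentially" using lim unfolding limitin_def by blast
  then show ?thesis by (rule eventually_mono) (auto simp: G_def C_def)
qed

lemma VS_mono: "(\<And>a. a \<in> A \<Longrightarrow> q' a \<subseteq> q a) \<Longrightarrow> VS X A q' \<subseteq> VS X A q"
  unfolding VS_def by blast

lemma int_step:
  assumes wb: "weak_base X P" and A: "A \<in> fin_subsets X"
    and q1: "q1 \<in> PiE A P" and q2: "q2 \<in> PiE A P"
  shows "\<exists>q3\<in>PiE A P. VS X A q3 \<subseteq> VS X A q1 \<inter> VS X A q2"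
proof -
  have AT: "A \<subseteq> topspace X" using A by (auto simp: fin_subsets_def)
  have ex: "\<forall>a\<in>A. \<exists>W. W \<in> P a \<and> W \<subseteq> q1 a \<inter> q2 a"
    using wb2[OF wb] AT q1 q2 by (meson PiE_mem subsetD)
  define q3 where "q3 = restrict (\<lambda>a. SOME W. W \<in> P a \<and> W \<subseteq> q1 a \<inter> q2 a) A"
  have q3: "\<forall>a\<in>A. q3 a \<in> P a \<and> q3 a \<subseteq> q1 a \<inter> q2 a"
  proof
    fix a assume a: "a \<in> A"
    then have "q3 a = (SOME W. W \<in> P a \<and> W \<subseteq> q1 a \<inter> q2 a)" by (simp add: q3_def)
    then show "q3 a \<in> P a \<and> q3 a \<subseteq> q1 a \<inter> q2 a" using someI_ex[OF ex[rule_format, OF a]] by simp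
  qed
  have "q3 \<in> PiE A P" using q3 unfolding q3_def by (auto simp: PiE_def)
  moreover have "VS X A q3 \<subseteq> VS X A q1" "VS X A q3 \<subseteq> VS X A q2"
    using q3 by (auto intro!: VS_mono)
  ultimately show ?thesis by blast
qed

lemma nbhd:
  assumes wb: "weak_base X P" and U: "openin (fin_subsets_topology X) U"
  shows "\<forall>A\<in>U. A \<in> fin_subsets X \<longrightarrow> (\<exists>q\<in>PiE A P. VS X A q \<subseteq> U)"
proof -
  have "generate_topology_on {vietoris_basic X Us | Us. finite Us \<and> Us \<noteq> {} \<and> (\<forall>U\<in>Us. openin X U)} U"
    using U unfolding fin_subsets_topology_def by (rule openin_topology_generated_by)
  then show ?thesis
  proof induction
    case Empty then show ?case by simp
  next
    case (Int a b)
    show ?case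
    proof (intro ballI impI)
      fix A assume Aab: "A \<in> a \<inter> b" and A: "A \<in> fin_subsets X"
      have "A \<in> a" "A \<in> b" using Aab by auto
      obtain q1 where q1: "q1 \<in> PiE A P" "VS X A q1 \<subseteq> a"
        using Int.IH(1)[rule_format, OF \<open>A \<in> a\<close> A] by (elim bexE)
      obtain q2 where q2: "q2 \<in> PiE A P" "VS X A q2 \<subseteq> b"
        using Int.IH(2)[rule_format, OF \<open>A \<in> b\<close> A] by (elim bexE)
      obtain q3 where q3: "q3 \<in> PiE A P" "VS X A q3 \<subseteq> VS X A q1 \<inter> VS X A q2"
        using int_step[OF wb A q1(1) q2(1)] by (elim bexE)
      have "VS X A q3 \<subseteq> a \<inter> b" using q1(2) q2(2) q3(2) by blast
      then show "\<exists>q\<in>PiE A P. VS X A q \<subseteq> a \<inter> b" using q3(1) by (intro bexI)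
    qed
  next
    case (UN K)
    show ?case
    proof (intro ballI impI)
      fix A assume AK: "A \<in> \<Union>K" and A: "A \<in> fin_subsets X"
      then obtain k where k: "k \<in> K" "A \<in> k" by (elim UnionE)
      obtain q where q: "q \<in> PiE A P" "VS X A q \<subseteq> k"
        using UN.IH[OF k(1), rule_format, OF k(2) A] by (elim bexE)
      have "VS X A q \<subseteq> \<Union>K" using q(2) k(1) by blast
      then show "\<exists>q\<in>PiE A P. VS X A q \<subseteq> \<Union>K" using q(1) by (intro bexI)
    qed
  next
    case (Basis s)
    then have "\<exists>Us. s = vietoris_basic X Us \<and> finite Us \<and> Us \<noteq> {} \<and> (\<forall>U\<in>Us. openin X U)"
      by (simp only: mem_Collect_eq)
    then obtain Us where Us: "s = vietoris_basic X Us" "finite Us" "Us \<noteq> {}" "\<forall>U\<in>Us. openin X U"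
      by (elim exE conjE)
    show ?case
    proof (intro ballI impI)
      fix A assume As: "A \<in> s" and A: "A \<in> fin_subsets X"
      have AT: "A \<subseteq> topspace X" using A by (auto simp: fin_subsets_def)
      define W where "W a = \<Inter>{U \<in> Us. a \<in> U}" for a
      have "\<forall>a\<in>A. openin X (W a) \<and> a \<in> W a"
      proof
        fix a assume a: "a \<in> A"
        then have "{U \<in> Us. a \<in> U} \<noteq> {}" using As Us(1) by (auto simp: vietoris_basic_def)
        then have "openin X (W a)" unfolding W_def using Us(2,4)
          by (intro openin_Inter) auto
        then show "openin X (W a) \<and> a \<in> W a" by (auto simp: W_def)
      qed
      then have ex: "\<forall>a\<in>A. \<exists>Q. Q \<in> P a \<and> Q \<subseteq> W a"
      proof (intro ballI)
        fix a assume "\<forall>a\<in>A. openin X (W a) \<and> a \<in> W a" "a \<in> A"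
        then have "openin X (W a)" "a \<in> W a" "a \<in> topspace X" using AT by auto
        from wb3[OF wb this(3) this(1) this(2)] show "\<exists>Q. Q \<in> P a \<and> Q \<subseteq> W a" by (elim bexE) blast
      qed
      define q where "q = restrict (\<lambda>a. SOME Q. Q \<in> P a \<and> Q \<subseteq> W a) A"
      have q: "\<forall>a\<in>A. q a \<in> P a \<and> q a \<subseteq> W a"
      proof
        fix a assume a: "a \<in> A"
        then have "q a = (SOME Q. Q \<in> P a \<and> Q \<subseteq> W a)" by (simp add: q_def)
        then show "q a \<in> P a \<and> q a \<subseteq> W a" using someI_ex[OF ex[rule_format, OF a]] by simp
      qed
      have "q \<in> PiE A P" using q unfolding q_def by (auto simp: PiE_def)
      moreover have "VS X A q \<subseteq> s"
      proof
        fix B assume B: "B \<in> VS X A q"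
        have "B \<subseteq> \<Union>Us"
        proof
          fix b assume "b \<in> B"
          then obtain a where a: "a \<in> A" "b \<in> q a" using B by (auto simp: VS_def)
          then have "b \<in> W a" using q by blast
          moreover have "a \<in> \<Union>Us" using As a Us(1) by (auto simp: vietoris_basic_def)
          ultimately show "b \<in> \<Union>Us" by (auto simp: W_def)
        qed
        moreover have "\<forall>U\<in>Us. B \<inter> U \<noteq> {}"
        proof
          fix U assume U: "U \<in> Us"
          then obtain a where a: "a \<in> A" "a \<in> U" using As Us(1) by (auto simp: vietoris_basic_def)
          then have "B \<inter> q a \<noteq> {}" using B by (auto simp: VS_def)
          moreover have "q a \<subseteq> U" using q a U by (auto simp: W_def)
          ultimately show "B \<inter> U \<noteq> {}" by blast
        qed
        ultimately show "B \<in> s" using B Us(1) by (auto simp: vietoris_basic_def VS_def)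
      qed
      ultimately show "\<exists>q\<in>PiE A P. VS X A q \<subseteq> s" by blast
    qed
  qed
qed


lemma basic_ev:
  assumes lim: "limitin (fin_subsets_topology X) s A sequentially"
    and Us: "finite Us" "Us \<noteq> {}" "\<forall>U\<in>Us. openin X U" and A: "A \<in> vietoris_basic X Us"
  shows "eventually (\<lambda>n. s n \<in> vietoris_basic X Us) sequentially"
proof -
  have "\<forall>U. openin (fin_subsets_topology X) U \<and> A \<in> U \<longrightarrow> eventually (\<lambda>n. s n \<in> U) sequentially"
    using lim by (simp add: limitin_def)
  then show ?thesis using open_basic[OF Us] A by blast
qed

lemma local_lemma:
  assumes wb: "weak_base X P" and H: "Hausdorff_space X"
    and A: "A \<in> fin_subsets X" and lim: "limitin (fin_subsets_topology X) s A sequentially"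
    and a: "a \<in> A" and Qa: "Qa \<in> P a"
  shows "\<exists>V. openin X V \<and> a \<in> V \<and> eventually (\<lambda>n. s n \<inter> V \<noteq> {} \<and> s n \<inter> V \<subseteq> Qa) sequentially"
proof -
  have AT: "A \<subseteq> topspace X" and fA: "finite A" using A by (auto simp: fin_subsets_def)
  have aT: "a \<in> topspace X" using AT a by blast
  have c1: "compactin X {a}" using aT by (intro finite_imp_compactin) auto
  have c2: "compactin X (A - {a})" using AT fA by (intro finite_imp_compactin) auto
  have dj: "disjnt {a} (A - {a})" by (simp add: disjnt_def)
  obtain V Ob where VO: "openin X V" "openin X Ob" "{a} \<subseteq> V" "A - {a} \<subseteq> Ob" "disjnt V Ob"
    using Hausdorff_space_compact_separation[OF H c1 c2 dj] by blast
  have aV: "a \<in> V" using VO(3) by blast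
  have "A \<in> vietoris_basic X {V \<union> Ob, V}"
    using A a aV VO(4) by (auto simp: vietoris_basic_def)
  then have "eventually (\<lambda>n. s n \<in> vietoris_basic X {V \<union> Ob, V}) sequentially"
    using VO(1,2) by (intro basic_ev[OF lim]) auto
  then have ev1: "eventually (\<lambda>n. s n \<subseteq> V \<union> Ob \<and> s n \<inter> V \<noteq> {}) sequentially"
    by (rule eventually_mono) (auto simp: vietoris_basic_def)
  define t where "t n = (SOME c. c \<in> s n \<inter> V \<and> (c \<notin> Qa \<or> s n \<inter> V \<subseteq> Qa))" for n
  have tin: "t n \<in> s n \<inter> V \<and> (t n \<notin> Qa \<or> s n \<inter> V \<subseteq> Qa)" if "s n \<inter> V \<noteq> {}" for n
    unfolding t_def by (rule someI_ex) (use that in blast)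
  have "limitin X t a sequentially"
    unfolding limitin_def
  proof (intro conjI allI impI)
    show "a \<in> topspace X" by fact
    fix U assume U: "openin X U \<and> a \<in> U"
    have "A \<in> vietoris_basic X {(U \<inter> V) \<union> Ob}"
      using A a aV U VO(4) by (auto simp: vietoris_basic_def)
    then have "eventually (\<lambda>n. s n \<in> vietoris_basic X {(U \<inter> V) \<union> Ob}) sequentially"
      using VO(1,2) U by (intro basic_ev[OF lim]) auto
    then show "eventually (\<lambda>n. t n \<in> U) sequentially"
      using ev1
    proof eventually_elim
      case (elim n)
      then have "t n \<in> s n \<inter> V" using tin by blast
      moreover have "s n \<subseteq> (U \<inter> V) \<union> Ob" using elim(1) by (auto simp: vietoris_basic_def)
      ultimately show "t n \<in> U" using VO(5) by (auto simp: disjnt_def)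
    qed
  qed
  then have "eventually (\<lambda>n. t n \<in> Qa) sequentially" by (rule L2[OF wb H _ Qa])
  then have "eventually (\<lambda>n. s n \<inter> V \<noteq> {} \<and> s n \<inter> V \<subseteq> Qa) sequentially"
    using ev1
  proof eventually_elim
    case (elim n)
    then show ?case using tin[of n] by blast
  qed
  then show ?thesis using VO(1) aV by blast
qed

lemma key:
  assumes wb: "weak_base X P" and H: "Hausdorff_space X"
    and A: "A \<in> fin_subsets X" and q: "q \<in> PiE A P"
    and lim: "limitin (fin_subsets_topology X) s A sequentially"
  shows "eventually (\<lambda>n. s n \<subseteq> \<Union>(q ` A) \<and> (\<forall>a\<in>A. s n \<inter> q a \<noteq> {})) sequentially"
proof -
  have AT: "A \<subseteq> topspace X" and fA: "finite A" and Ane: "A \<noteq> {}" using A by (auto simp: fin_subsets_def)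
  have ex: "\<forall>a\<in>A. \<exists>V. openin X V \<and> a \<in> V \<and> eventually (\<lambda>n. s n \<inter> V \<noteq> {} \<and> s n \<inter> V \<subseteq> q a) sequentially"
  proof
    fix a assume a: "a \<in> A"
    then have "q a \<in> P a" using q by (rule PiE_mem[rotated])
    then show "\<exists>V. openin X V \<and> a \<in> V \<and> eventually (\<lambda>n. s n \<inter> V \<noteq> {} \<and> s n \<inter> V \<subseteq> q a) sequentially"
      by (rule local_lemma[OF wb H A lim a])
  qed
  obtain Vf where Vf: "\<forall>a\<in>A. openin X (Vf a) \<and> a \<in> Vf a \<and> eventually (\<lambda>n. s n \<inter> Vf a \<noteq> {} \<and> s n \<inter> Vf a \<subseteq> q a) sequentially"
    using bchoice[OF ex] by blast
  have ev: "eventually (\<lambda>n. \<forall>a\<in>A. s n \<inter> Vf a \<noteq> {} \<and> s n \<inter> Vf a \<subseteq> q a) sequentially"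
    using fA Vf by (simp add: eventually_ball_finite)
  define W where "W = \<Union>(Vf ` A)"
  have oW: "openin X W" unfolding W_def using Vf by (intro openin_Union) auto
  have "A \<in> vietoris_basic X {W}"
    using A Ane Vf by (auto simp: vietoris_basic_def W_def)
  then have "eventually (\<lambda>n. s n \<in> vietoris_basic X {W}) sequentially"
    using oW by (intro basic_ev[OF lim]) auto
  then show ?thesis
    using ev
  proof eventually_elim
    case (elim n)
    have "s n \<subseteq> W" using elim(1) by (auto simp: vietoris_basic_def)
    then have "s n \<subseteq> \<Union>(q ` A)" using elim(2) unfolding W_def by blast
    moreover have "\<forall>a\<in>A. s n \<inter> q a \<noteq> {}" using elim(2) by blast
    ultimately show ?case by blast
  qed
qed

theorem theorem4p12:
  fixes X :: "'a topology"
  assumes "regular_space X" and "Hausdorff_space X" and "g_first_countable X"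
  shows "g_first_countable (fin_subsets_topology X) \<longleftrightarrow> sequential_space (fin_subsets_topology X)"
proof
  assume "g_first_countable (fin_subsets_topology X)"
  then obtain P' where "weak_base (fin_subsets_topology X) P'"
      "\<forall>y\<in>topspace (fin_subsets_topology X). countable (P' y)"
    unfolding g_first_countable_def by blast
  then show "sequential_space (fin_subsets_topology X)" by (rule wfc_imp_sequential)
next
  assume seq: "sequential_space (fin_subsets_topology X)"
  note H = assms(2)
  obtain P where wb: "weak_base X P" and cP: "\<forall>y\<in>topspace X. countable (P y)"
    using assms(3) unfolding g_first_countable_def by blast
  define P' where "P' A = (\<lambda>q. VS X A q) ` PiE A P" for A
  have h1: "\<forall>y\<in>fin_subsets X. \<forall>Q\<in>P' y. Q \<subseteq> fin_subsets X \<and> y \<in> Q"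
  proof (intro ballI)
    fix y Q assume y: "y \<in> fin_subsets X" and Q: "Q \<in> P' y"
    then obtain q where q: "q \<in> PiE y P" "Q = VS X y q" unfolding P'_def by (elim imageE)
    have yT: "y \<subseteq> topspace X" using y by (auto simp: fin_subsets_def)
    have aq: "a \<in> q a" if "a \<in> y" for a
      using wb1[OF wb _ PiE_mem[OF q(1) that]] yT that by blast
    have "y \<in> VS X y q" unfolding VS_def using y aq by blast
    moreover have "VS X y q \<subseteq> fin_subsets X" unfolding VS_def by blast
    ultimately show "Q \<subseteq> fin_subsets X \<and> y \<in> Q" using q(2) by blast
  qed
  have h2: "\<forall>y\<in>fin_subsets X. \<forall>U\<in>P' y. \<forall>V\<in>P' y. \<exists>W\<in>P' y. W \<subseteq> U \<inter> V"
  proof (intro ballI)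
    fix y U V assume y: "y \<in> fin_subsets X" and U: "U \<in> P' y" and V: "V \<in> P' y"
    obtain q1 where q1: "q1 \<in> PiE y P" "U = VS X y q1" using U unfolding P'_def by (elim imageE)
    obtain q2 where q2: "q2 \<in> PiE y P" "V = VS X y q2" using V unfolding P'_def by (elim imageE)
    obtain q3 where q3: "q3 \<in> PiE y P" "VS X y q3 \<subseteq> VS X y q1 \<inter> VS X y q2"
      using int_step[OF wb y q1(1) q2(1)] by (elim bexE)
    have "VS X y q3 \<in> P' y" unfolding P'_def using q3(1) by (rule imageI)
    then show "\<exists>W\<in>P' y. W \<subseteq> U \<inter> V" using q3(2) q1(2) q2(2) by blast
  qed
  have h3: "\<forall>y\<in>fin_subsets X. \<forall>U. openin (fin_subsets_topology X) U \<and> y \<in> U \<longrightarrow> (\<exists>Q\<in>P' y. Q \<subseteq> U)"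
  proof (intro ballI allI impI)
    fix y U assume y: "y \<in> fin_subsets X" and U: "openin (fin_subsets_topology X) U \<and> y \<in> U"
    obtain q where q: "q \<in> PiE y P" "VS X y q \<subseteq> U"
      using nbhd[OF wb conjunct1[OF U], rule_format, OF conjunct2[OF U] y] by (elim bexE)
    have "VS X y q \<in> P' y" unfolding P'_def using q(1) by (rule imageI)
    then show "\<exists>Q\<in>P' y. Q \<subseteq> U" using q(2) by blast
  qed
  have h4: "\<forall>G. G \<subseteq> fin_subsets X \<and> (\<forall>y\<in>G. \<exists>Q\<in>P' y. Q \<subseteq> G) \<longrightarrow> openin (fin_subsets_topology X) G"
  proof (intro allI impI)
    fix G assume G: "G \<subseteq> fin_subsets X \<and> (\<forall>y\<in>G. \<exists>Q\<in>P' y. Q \<subseteq> G)"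
    have "sequentially_open (fin_subsets_topology X) G"
      unfolding sequentially_open_def topspace_F
    proof (intro conjI ballI allI impI)
      show "G \<subseteq> fin_subsets X" using G by blast
      fix x s assume x: "x \<in> G" and s: "(\<forall>n. s n \<in> fin_subsets X) \<and> limitin (fin_subsets_topology X) s x sequentially"
      obtain Q where Q: "Q \<in> P' x" "Q \<subseteq> G" using G x by blast
      obtain q where q: "q \<in> PiE x P" "Q = VS X x q" using Q(1) unfolding P'_def by (elim imageE)
      have xF: "x \<in> fin_subsets X" using G x by blast
      have "eventually (\<lambda>n. s n \<subseteq> \<Union>(q ` x) \<and> (\<forall>a\<in>x. s n \<inter> q a \<noteq> {})) sequentially"
        using key[OF wb H xF q(1)] s by blast
      then show "eventually (\<lambda>n. s n \<in> G) sequentially"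
      proof (rule eventually_mono)
        fix n assume "s n \<subseteq> \<Union>(q ` x) \<and> (\<forall>a\<in>x. s n \<inter> q a \<noteq> {})"
        then have "s n \<in> VS X x q" using s unfolding VS_def by blast
        then show "s n \<in> G" using q(2) Q(2) by blast
      qed
    qed
    then show "openin (fin_subsets_topology X) G" using seq unfolding sequential_space_def by blast
  qed
  have wbF: "weak_base (fin_subsets_topology X) P'"
    unfolding weak_base_def topspace_F by (intro conjI h1 h2 h3 h4)
  have cF: "\<forall>y\<in>topspace (fin_subsets_topology X). countable (P' y)"
  proof
    fix y assume "y \<in> topspace (fin_subsets_topology X)"
    then have y: "finite y" "y \<subseteq> topspace X" by (auto simp: topspace_F fin_subsets_def)
    have "countable (PiE y P)" using y cP by (intro countable_PiE) auto
    then show "countable (P' y)" unfolding P'_def by (rule countable_image)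
  qed
  show "g_first_countable (fin_subsets_topology X)"
    unfolding g_first_countable_def using wbF cF by blast
qed

end
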